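(* Under the setting of Theorem 1, the cross entropy between the data and learned distributions satisfies $$H(p_0,p_0^\theta)\le \int_0^1\mathbb{E}_{x_t\sim p_t}\sum_{y\neq x_t}Q_t(x_t,y)\,\bar\ell\!\left(\frac{p_t(y)}{p_t(x_t)},\,s_\theta(x_t,t)_y\right)dt-\int_0^1\mathbb{E}_{x_t\sim p_t}\sum_{y\neq x_t}Q_t(y,x_t)\,dt+H(p_1,p_r).$$
   Context: Finite state space $\mathcal{X}$; $(Q_t)_{t\in[0,1]}$ transition-rate matrices (nonnegative off-diagonal entries, columns summing to zero, $Q_t(x,y)$ for $x\ne y$ is the rate of jumping from $y$ to $x$). The forward process has marginals $p_t$ solving $\frac{d}{dt}p_t=Q_tp_t$ from the data distribution $p_0$; the true reverse process (from $t=1$ to $0$, started from $p_1$, jump rate $Q_t(x,y)p_t(y)/p_t(x)$ from $x$ to $y$) has marginals $p_t$. A model $s_\theta(x,t)_y>0$ ($x\ne y$) is given; the learned reverse process (from $t=1$ to $0$, started from reference distribution $p_r$, jump rate $Q_t(x,y)s_\theta(x,t)_y$ from $x$ to $y\ne x$) has marginals $p^\theta_t$. $H(p,q)=-\sum_x p(x)\log q(x)$ is the cross entropy, and $\bar\ell(a,b)=b-a\log b$. *)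

theory Defs
  imports "HOL-Analysis.Analysis"
begin

definition cross_entropy :: "('x::finite \<Rightarrow> real) \<Rightarrow> ('x \<Rightarrow> real) \<Rightarrow> real" where
  "cross_entropy p q = - (\<Sum>x\<in>UNIV. p x * ln (q x))"

definition lbar :: "real \<Rightarrow> real \<Rightarrow> real" where
  "lbar a b = b - a * ln b"

text \<open>Transition-rate matrix: Q x y (x \<noteq> y) is the rate of jumping from y to x;
  off-diagonal entries nonnegative, columns sum to zero.\<close>
definition rate_matrix :: "('x::finite \<Rightarrow> 'x \<Rightarrow> real) \<Rightarrow> bool" where
  "rate_matrix Q \<longleftrightarrow> (\<forall>x y. x \<noteq> y \<longrightarrow> 0 \<le> Q x y) \<and> (\<forall>y. (\<Sum>x\<in>UNIV. Q x y) = 0)"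

end

theory Submission
  imports Defs "HOL-Analysis.Analysis"
begin
lemma pos_backward:
  fixes R :: "real \<Rightarrow> 'x::finite \<Rightarrow> real" and lam :: "real \<Rightarrow> 'x \<Rightarrow> real"
    and c :: "real \<Rightarrow> 'x \<Rightarrow> 'x \<Rightarrow> real"
  assumes R1: "\<And>x. R 1 x > 0"
    and deriv: "\<And>t x. t \<in> {0..1} \<Longrightarrow> ((\<lambda>u. R u x) has_real_derivative
          (- (\<Sum>y\<in>UNIV - {x}. c t y x * R t y) + lam t x * R t x)) (at t within {0..1})"
    and c_nn: "\<And>t x y. t \<in> {0..1} \<Longrightarrow> x \<noteq> y \<Longrightarrow> 0 \<le> c t y x"
    and lam_cont: "\<And>x. continuous_on {0..1} (\<lambda>t. lam t x)"
  shows "\<And>t x. t \<in> {0..1} \<Longrightarrow> R t x > 0"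
proof (rule ccontr)
  fix t x assume t: "t \<in> {0..1}" and nt: "\<not> R t x > 0"
  define T where "T = (\<Union>y. {u \<in> {0..1::real}. R u y \<le> 0})"
  have Rc: "continuous_on {0..1} (\<lambda>u. R u y)" for y
    by (rule DERIV_continuous_on[OF deriv])
  have cl: "closed {u \<in> {0..1::real}. R u y \<le> 0}" for y
    using continuous_on_closed_Collect_le[OF Rc continuous_on_const closed_atLeastAtMost] by simp
  have "closed T" unfolding T_def
    by (rule closed_UN) (simp, rule ballI, rule cl)
  moreover have "bounded T" by (rule bounded_subset[of "{0..1}"]) (auto simp: T_def)
  ultimately have "compact T" by (simp add: compact_eq_bounded_closed)
  moreover have "T \<noteq> {}" using t nt by (auto simp: T_def not_less)
  ultimately obtain t0 where t0: "t0 \<in> T" and t0max: "\<And>u. u \<in> T \<Longrightarrow> u \<le> t0"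
    using compact_attains_sup by metis
  obtain y0 where y0: "R t0 y0 \<le> 0" and t01: "t0 \<in> {0..1}" using t0 by (auto simp: T_def)
  have after: "R u y > 0" if "t0 < u" "u \<le> 1" for u y
  proof (rule ccontr)
    assume "\<not> R u y > 0"
    then have "u \<in> T" using that t01 by (auto simp: T_def not_less)
    then show False using t0max that by fastforce
  qed
  define L where "L = (\<lambda>u. integral {0..u} (\<lambda>v. lam v y0))"
  define h where "h = (\<lambda>u. R u y0 * exp (- L u))"
  have hd: "(h has_real_derivative (- (\<Sum>y\<in>UNIV - {y0}. c u y y0 * R u y) * exp (- L u))) (at u within {0..1})"
    if u: "u \<in> {0..1}" for u
  proof -
    have "(L has_real_derivative lam u y0) (at u within {0..1})"
      unfolding L_def by (rule integral_has_real_derivative[OF lam_cont u])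
    then have "((\<lambda>u. exp (- L u)) has_real_derivative exp (- L u) * (- lam u y0)) (at u within {0..1})"
      by (auto intro!: derivative_eq_intros)
    from DERIV_mult[OF deriv[OF u, of y0] this] show ?thesis
      unfolding h_def by (simp add: algebra_simps)
  qed
  have "h 1 \<le> h t0"
  proof (rule DERIV_nonpos_imp_decreasing_open[of t0 1 h])
    show "t0 \<le> 1" using t01 by simp
    show "continuous_on {t0..1} h"
      by (rule continuous_on_subset[OF DERIV_continuous_on[OF hd]]) (use t01 in auto)
    fix u assume u: "t0 < u" "u < 1"
    have "u \<in> interior {0..1::real}" using u t01 by auto
    then have "at u within {0..1} = at u" by (rule at_within_interior)
    moreover have "(\<Sum>y\<in>UNIV - {y0}. c u y y0 * R u y) \<ge> 0"
      using u t01 by (intro sum_nonneg mult_nonneg_nonneg c_nn less_imp_le[OF after]) auto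
    ultimately show "\<exists>y. DERIV h u :> y \<and> y \<le> 0"
      using hd[of u] u t01 by (intro exI[of _ "- (\<Sum>y\<in>UNIV - {y0}. c u y y0 * R u y) * exp (- L u)"]) auto
  qed
  moreover have "h 1 > 0" using R1 by (simp add: h_def)
  ultimately have "h t0 > 0" by simp
  then show False using y0 by (simp add: h_def zero_less_mult_iff)
qed

lemma offdiag_swap:
  fixes f :: "'x::finite \<Rightarrow> 'x \<Rightarrow> real"
  shows "(\<Sum>x\<in>UNIV. \<Sum>y\<in>UNIV - {x}. f x y) = (\<Sum>x\<in>UNIV. \<Sum>y\<in>UNIV - {x}. f y x)"
proof -
  have e: "(\<Sum>y\<in>UNIV - {x}. g y) = (\<Sum>y\<in>UNIV. if y = x then 0 else g y)" for x and g :: "'x \<Rightarrow> real"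
    by (subst sum.remove[of UNIV x]) (auto intro!: sum.cong)
  show ?thesis unfolding e by (subst sum.swap) (auto intro!: sum.cong)
qed

lemma key:
  fixes q :: "'x::finite \<Rightarrow> 'x \<Rightarrow> real" and P R :: "'x \<Rightarrow> real" and S :: "'x \<Rightarrow> 'x \<Rightarrow> real"
  assumes q: "rate_matrix q" and P: "\<And>x. P x > 0" and R: "\<And>x. R x > 0"
    and S: "\<And>x y. x \<noteq> y \<Longrightarrow> S x y > 0"
  shows "(\<Sum>x\<in>UNIV. (\<Sum>y\<in>UNIV. q x y * P y) * ln (R x) + P x *
          ((- (\<Sum>y\<in>UNIV - {x}. q y x * S y x * R y) + (\<Sum>y\<in>UNIV - {x}. q x y * S x y) * R x) / R x))
      \<le> (\<Sum>x\<in>UNIV. P x * (\<Sum>y\<in>UNIV - {x}. q x y * lbar (P y / P x) (S x y)))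
         - (\<Sum>x\<in>UNIV. P x * (\<Sum>y\<in>UNIV - {x}. q y x))"
proof -
  have qnn: "x \<noteq> y \<Longrightarrow> q x y \<ge> 0" for x y using q by (simp add: rate_matrix_def)
  have qd: "q x x = - (\<Sum>y\<in>UNIV - {x}. q y x)" for x
  proof -
    have "(\<Sum>y\<in>UNIV. q y x) = 0" using q by (simp add: rate_matrix_def)
    then show ?thesis by (subst (asm) sum.remove[of UNIV x]) auto
  qed
  have spl: "(\<Sum>y\<in>UNIV. g y) = g x + (\<Sum>y\<in>UNIV - {x}. g y)" for x and g :: "'x \<Rightarrow> real"
    by (rule sum.remove) auto
  have e1: "(\<Sum>x\<in>UNIV. (\<Sum>y\<in>UNIV. q x y * P y) * ln (R x))
     = (\<Sum>x\<in>UNIV. \<Sum>y\<in>UNIV - {x}. q x y * P y * ln (R x)) - (\<Sum>x\<in>UNIV. \<Sum>y\<in>UNIV - {x}. q x y * P y * ln (R y))"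
  proof -
    have "(\<Sum>x\<in>UNIV. (\<Sum>y\<in>UNIV. q x y * P y) * ln (R x))
       = (\<Sum>x\<in>UNIV. (\<Sum>y\<in>UNIV - {x}. q x y * P y * ln (R x)) - (\<Sum>y\<in>UNIV - {x}. q y x * P x * ln (R x)))"
    proof (intro sum.cong refl)
      fix x
      have E1: "(\<Sum>y\<in>UNIV. q x y * P y) = q x x * P x + (\<Sum>y\<in>UNIV - {x}. q x y * P y)"
        by (rule spl)
      have E2: "(\<Sum>y\<in>UNIV - {x}. q y x * P x * ln (R x)) = (\<Sum>y\<in>UNIV - {x}. q y x) * P x * ln (R x)"
        by (simp add: sum_distrib_right)
      have E3: "(\<Sum>y\<in>UNIV - {x}. q x y * P y * ln (R x)) = (\<Sum>y\<in>UNIV - {x}. q x y * P y) * ln (R x)"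
        by (simp add: sum_distrib_right)
      show "(\<Sum>y\<in>UNIV. q x y * P y) * ln (R x) = (\<Sum>y\<in>UNIV - {x}. q x y * P y * ln (R x)) - (\<Sum>y\<in>UNIV - {x}. q y x * P x * ln (R x))"
        unfolding E1 E2 E3 qd[of x] by (simp add: algebra_simps)
    qed
    also have "\<dots> = (\<Sum>x\<in>UNIV. \<Sum>y\<in>UNIV - {x}. q x y * P y * ln (R x)) - (\<Sum>x\<in>UNIV. \<Sum>y\<in>UNIV - {x}. q y x * P x * ln (R x))"
      by (simp add: sum_subtractf)
    also have "(\<Sum>x\<in>UNIV. \<Sum>y\<in>UNIV - {x}. q y x * P x * ln (R x)) = (\<Sum>x\<in>UNIV. \<Sum>y\<in>UNIV - {x}. q x y * P y * ln (R y))"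
      by (rule offdiag_swap)
    finally show ?thesis .
  qed
  have e2: "(\<Sum>x\<in>UNIV. P x *
          ((- (\<Sum>y\<in>UNIV - {x}. q y x * S y x * R y) + (\<Sum>y\<in>UNIV - {x}. q x y * S x y) * R x) / R x))
     = (\<Sum>x\<in>UNIV. \<Sum>y\<in>UNIV - {x}. P x * q x y * S x y) - (\<Sum>x\<in>UNIV. \<Sum>y\<in>UNIV - {x}. q x y * S x y * R x * P y / R y)"
  proof -
    have "(\<Sum>x\<in>UNIV. P x *
          ((- (\<Sum>y\<in>UNIV - {x}. q y x * S y x * R y) + (\<Sum>y\<in>UNIV - {x}. q x y * S x y) * R x) / R x))
      = (\<Sum>x\<in>UNIV. (\<Sum>y\<in>UNIV - {x}. P x * q x y * S x y) - (\<Sum>y\<in>UNIV - {x}. q y x * S y x * R y * P x / R x))"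
    proof (intro sum.cong refl)
      fix x
      have "R x \<noteq> 0" using R[of x] by simp
      then show "P x * ((- (\<Sum>y\<in>UNIV - {x}. q y x * S y x * R y) + (\<Sum>y\<in>UNIV - {x}. q x y * S x y) * R x) / R x)
        = (\<Sum>y\<in>UNIV - {x}. P x * q x y * S x y) - (\<Sum>y\<in>UNIV - {x}. q y x * S y x * R y * P x / R x)"
        by (simp add: field_simps sum_distrib_left sum_distrib_right sum_divide_distrib)
    qed
    also have "\<dots> = (\<Sum>x\<in>UNIV. \<Sum>y\<in>UNIV - {x}. P x * q x y * S x y) - (\<Sum>x\<in>UNIV. \<Sum>y\<in>UNIV - {x}. q y x * S y x * R y * P x / R x)"
      by (simp add: sum_subtractf)
    also have "(\<Sum>x\<in>UNIV. \<Sum>y\<in>UNIV - {x}. q y x * S y x * R y * P x / R x) = (\<Sum>x\<in>UNIV. \<Sum>y\<in>UNIV - {x}. q x y * S x y * R x * P y / R y)"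
      by (rule offdiag_swap)
    finally show ?thesis .
  qed
  have e3: "(\<Sum>x\<in>UNIV. P x * (\<Sum>y\<in>UNIV - {x}. q x y * lbar (P y / P x) (S x y)))
     = (\<Sum>x\<in>UNIV. \<Sum>y\<in>UNIV - {x}. q x y * S x y * P x) - (\<Sum>x\<in>UNIV. \<Sum>y\<in>UNIV - {x}. q x y * P y * ln (S x y))"
  proof -
    have "(\<Sum>x\<in>UNIV. P x * (\<Sum>y\<in>UNIV - {x}. q x y * lbar (P y / P x) (S x y)))
      = (\<Sum>x\<in>UNIV. (\<Sum>y\<in>UNIV - {x}. q x y * S x y * P x) - (\<Sum>y\<in>UNIV - {x}. q x y * P y * ln (S x y)))"
    proof (intro sum.cong refl)
      fix x
      have "P x \<noteq> 0" using P[of x] by simp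
      have "P x * (\<Sum>y\<in>UNIV - {x}. q x y * lbar (P y / P x) (S x y))
          = (\<Sum>y\<in>UNIV - {x}. P x * (q x y * lbar (P y / P x) (S x y)))"
        by (simp add: sum_distrib_left)
      also have "\<dots> = (\<Sum>y\<in>UNIV - {x}. q x y * S x y * P x - q x y * P y * ln (S x y))"
        using \<open>P x \<noteq> 0\<close> by (intro sum.cong refl) (simp add: lbar_def field_simps)
      finally show "P x * (\<Sum>y\<in>UNIV - {x}. q x y * lbar (P y / P x) (S x y))
        = (\<Sum>y\<in>UNIV - {x}. q x y * S x y * P x) - (\<Sum>y\<in>UNIV - {x}. q x y * P y * ln (S x y))"
        by (simp add: sum_subtractf)
    qed
    also have "\<dots> = (\<Sum>x\<in>UNIV. \<Sum>y\<in>UNIV - {x}. q x y * S x y * P x) - (\<Sum>x\<in>UNIV. \<Sum>y\<in>UNIV - {x}. q x y * P y * ln (S x y))"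
      by (simp add: sum_subtractf)
    finally show ?thesis .
  qed
  have e4: "(\<Sum>x\<in>UNIV. P x * (\<Sum>y\<in>UNIV - {x}. q y x)) = (\<Sum>x\<in>UNIV. \<Sum>y\<in>UNIV - {x}. q x y * P y)"
  proof -
    have "(\<Sum>x\<in>UNIV. P x * (\<Sum>y\<in>UNIV - {x}. q y x)) = (\<Sum>x\<in>UNIV. \<Sum>y\<in>UNIV - {x}. q y x * P x)"
      by (simp add: sum_distrib_left mult.commute)
    also have "\<dots> = (\<Sum>x\<in>UNIV. \<Sum>y\<in>UNIV - {x}. q x y * P y)"
      by (rule offdiag_swap)
    finally show ?thesis .
  qed
  define g where "g x y = q x y * P y * (S x y * R x / R y - 1 - (ln (S x y) + ln (R x) - ln (R y)))" for x y
  have gsum: "(\<Sum>x\<in>UNIV. \<Sum>y\<in>UNIV - {x}. g x y) =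
      (\<Sum>x\<in>UNIV. \<Sum>y\<in>UNIV - {x}. q x y * S x y * R x * P y / R y)
    - (\<Sum>x\<in>UNIV. \<Sum>y\<in>UNIV - {x}. q x y * P y)
    - (\<Sum>x\<in>UNIV. \<Sum>y\<in>UNIV - {x}. q x y * P y * ln (S x y))
    - (\<Sum>x\<in>UNIV. \<Sum>y\<in>UNIV - {x}. q x y * P y * ln (R x))
    + (\<Sum>x\<in>UNIV. \<Sum>y\<in>UNIV - {x}. q x y * P y * ln (R y))"
    by (simp add: g_def sum_subtractf sum.distrib algebra_simps)
  have gnn: "(\<Sum>x\<in>UNIV. \<Sum>y\<in>UNIV - {x}. g x y) \<ge> 0"
  proof (intro sum_nonneg)
    fix x y :: 'x assume y: "y \<in> UNIV - {x}"
    then have xy: "x \<noteq> y" by auto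
    have pos: "S x y * R x / R y > 0" using S[OF xy] R[of x] R[of y] by simp
    have "ln (S x y * R x / R y) = ln (S x y) + ln (R x) - ln (R y)"
      using S[OF xy] R[of x] R[of y] by (simp add: ln_mult ln_div)
    then have "S x y * R x / R y - 1 - (ln (S x y) + ln (R x) - ln (R y)) \<ge> 0"
      using ln_le_minus_one[OF pos] by linarith
    then show "g x y \<ge> 0" unfolding g_def
      using qnn[OF xy] P[of y] by (intro mult_nonneg_nonneg) auto
  qed
  have comm: "(\<Sum>x\<in>UNIV. \<Sum>y\<in>UNIV - {x}. P x * q x y * S x y) = (\<Sum>x\<in>UNIV. \<Sum>y\<in>UNIV - {x}. q x y * S x y * P x)"
    by (simp add: mult_ac)
  show ?thesis
    unfolding sum.distrib e1 e2 e3 e4 comm using gsum gnn by linarith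
qed

theorem theorem4:
  fixes Q :: "real \<Rightarrow> 'x::finite \<Rightarrow> 'x \<Rightarrow> real"
    and p :: "real \<Rightarrow> 'x \<Rightarrow> real"
    and s :: "'x \<Rightarrow> real \<Rightarrow> 'x \<Rightarrow> real"
    and pth :: "real \<Rightarrow> 'x \<Rightarrow> real"
    and pr :: "'x \<Rightarrow> real"
  assumes Q_rate: "\<And>t. t \<in> {0..1} \<Longrightarrow> rate_matrix (Q t)"
    and Q_cont: "\<And>x y. continuous_on {0..1} (\<lambda>t. Q t x y)"
    and p0_distr: "(\<Sum>x\<in>UNIV. p 0 x) = 1"
    and p_pos: "\<And>t x. t \<in> {0..1} \<Longrightarrow> 0 < p t x"
    and p_forward: "\<And>t x. t \<in> {0..1} \<Longrightarrow>
        ((\<lambda>u. p u x) has_real_derivative (\<Sum>y\<in>UNIV. Q t x y * p t y)) (at t within {0..1})"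
    and s_pos: "\<And>x t y. t \<in> {0..1} \<Longrightarrow> x \<noteq> y \<Longrightarrow> 0 < s x t y"
    and s_cont: "\<And>x y. continuous_on {0..1} (\<lambda>t. s x t y)"
    and pr_pos: "\<And>x. 0 < pr x"
    and pr_distr: "(\<Sum>x\<in>UNIV. pr x) = 1"
    and pth_init: "pth 1 = pr"
    and pth_backward: "\<And>t x. t \<in> {0..1} \<Longrightarrow>
        ((\<lambda>u. pth u x) has_real_derivative
          (- (\<Sum>y\<in>UNIV - {x}. Q t y x * s y t x * pth t y)
           + (\<Sum>y\<in>UNIV - {x}. Q t x y * s x t y) * pth t x)) (at t within {0..1})"
  shows "cross_entropy (p 0) (pth 0) \<le>
           integral {0..1} (\<lambda>t. \<Sum>x\<in>UNIV. p t x *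
              (\<Sum>y\<in>UNIV - {x}. Q t x y * lbar (p t y / p t x) (s x t y)))
         - integral {0..1} (\<lambda>t. \<Sum>x\<in>UNIV. p t x * (\<Sum>y\<in>UNIV - {x}. Q t y x))
         + cross_entropy (p 1) pr"
proof -
  have pth_pos: "\<And>t x. t \<in> {0..1} \<Longrightarrow> pth t x > 0"
  proof (rule pos_backward[where R=pth and lam="\<lambda>t x. \<Sum>y\<in>UNIV - {x}. Q t x y * s x t y" and c="\<lambda>t y x. Q t y x * s y t x"])
    show "\<And>x. 0 < pth 1 x" using pth_init pr_pos by simp
    show "\<And>t x. t \<in> {0..1} \<Longrightarrow> ((\<lambda>u. pth u x) has_real_derivative
          (- (\<Sum>y\<in>UNIV - {x}. Q t y x * s y t x * pth t y) + (\<Sum>y\<in>UNIV - {x}. Q t x y * s x t y) * pth t x))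
          (at t within {0..1})" by (rule pth_backward)
    show "\<And>t x y. t \<in> {0..1} \<Longrightarrow> x \<noteq> y \<Longrightarrow> 0 \<le> Q t y x * s y t x"
    proof -
      fix t x y assume t: "t \<in> {0..1::real}" and xy: "(x::'x) \<noteq> y"
      have "0 \<le> Q t y x" using Q_rate[OF t] xy by (simp add: rate_matrix_def)
      moreover have "0 < s y t x" using s_pos[OF t] xy by simp
      ultimately show "0 \<le> Q t y x * s y t x" by simp
    qed
    show "\<And>x. continuous_on {0..1} (\<lambda>t. \<Sum>y\<in>UNIV - {x}. Q t x y * s x t y)"
      by (intro continuous_intros Q_cont s_cont)
  qed
  have p_cont: "continuous_on {0..1} (\<lambda>t. p t x)" for x
    by (rule DERIV_continuous_on[OF p_forward])
  define A where "A t = (\<Sum>x\<in>UNIV. p t x * (\<Sum>y\<in>UNIV - {x}. Q t x y * lbar (p t y / p t x) (s x t y)))" for t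
  define B where "B t = (\<Sum>x\<in>UNIV. p t x * (\<Sum>y\<in>UNIV - {x}. Q t y x))" for t
  define F where "F t = (\<Sum>x\<in>UNIV. p t x * ln (pth t x))" for t
  define F' where "F' t = (\<Sum>x\<in>UNIV. (\<Sum>y\<in>UNIV. Q t x y * p t y) * ln (pth t x) + p t x *
          ((- (\<Sum>y\<in>UNIV - {x}. Q t y x * s y t x * pth t y) + (\<Sum>y\<in>UNIV - {x}. Q t x y * s x t y) * pth t x) / pth t x))" for t
  have A_cont: "continuous_on {0..1} A"
  proof -
    have pne: "p t x = 0 \<Longrightarrow> t \<in> {0..1} \<Longrightarrow> False" for t x using p_pos[of t x] by simp
    have sne: "s x t y = 0 \<Longrightarrow> t \<in> {0..1} \<Longrightarrow> x \<noteq> y \<Longrightarrow> False" for t x y using s_pos[of t x y] by simp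
    show ?thesis unfolding A_def lbar_def
      by (intro continuous_intros Q_cont s_cont p_cont) (auto dest: pne sne)
  qed
  have B_cont: "continuous_on {0..1} B"
    unfolding B_def by (intro continuous_intros Q_cont p_cont)
  have Fd: "(F has_real_derivative F' t) (at t within {0..1})" if t: "t \<in> {0..1}" for t
    unfolding F_def F'_def
  proof (rule DERIV_sum)
    fix x :: 'x
    have l: "((\<lambda>u. ln (pth u x)) has_real_derivative (1 / pth t x) *
        (- (\<Sum>y\<in>UNIV - {x}. Q t y x * s y t x * pth t y) + (\<Sum>y\<in>UNIV - {x}. Q t x y * s x t y) * pth t x))
        (at t within {0..1})"
      by (rule DERIV_chain2[OF DERIV_ln_divide[OF pth_pos[OF t]] pth_backward[OF t]])
    have pn: "pth t x \<noteq> 0" using pth_pos[OF t, of x] by simp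
    from DERIV_mult[OF p_forward[OF t, of x] l] show "((\<lambda>u. p u x * ln (pth u x)) has_real_derivative
       (\<Sum>y\<in>UNIV. Q t x y * p t y) * ln (pth t x) + p t x *
          ((- (\<Sum>y\<in>UNIV - {x}. Q t y x * s y t x * pth t y) + (\<Sum>y\<in>UNIV - {x}. Q t x y * s x t y) * pth t x) / pth t x))
       (at t within {0..1})"
      by (rule DERIV_cong) (use pn in \<open>simp add: field_simps\<close>)
  qed
  have Fint: "(F' has_integral (F 1 - F 0)) {0..1}"
    by (rule fundamental_theorem_of_calculus) (auto simp: has_real_derivative_iff_has_vector_derivative[symmetric] intro: Fd)
  have le: "F' t \<le> A t - B t" if t: "t \<in> {0..1}" for t
    unfolding F'_def A_def B_def
    by (rule key[OF Q_rate[OF t]]) (auto intro: p_pos[OF t] pth_pos[OF t] s_pos[OF t])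
  have Aint: "A integrable_on {0..1}" by (rule integrable_continuous_real[OF A_cont])
  have Bint: "B integrable_on {0..1}" by (rule integrable_continuous_real[OF B_cont])
  have "F 1 - F 0 \<le> integral {0..1} (\<lambda>t. A t - B t)"
    by (rule has_integral_le[OF Fint integrable_integral[OF integrable_diff[OF Aint Bint]]]) (rule le)
  also have "\<dots> = integral {0..1} A - integral {0..1} B"
    by (rule integral_diff[OF Aint Bint])
  finally have main: "F 1 - F 0 \<le> integral {0..1} A - integral {0..1} B" .
  have "cross_entropy (p 0) (pth 0) = - F 0" by (simp add: cross_entropy_def F_def)
  moreover have "cross_entropy (p 1) pr = - F 1" by (simp add: cross_entropy_def F_def pth_init)
  ultimately show ?thesis using main unfolding A_def B_def by linarith
qed

end
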